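(* Let $d\le r$, $G\in\mathbb{R}^{r\times d}$, $Y\in\mathbb{R}^{r\times d}$ with $Y^\top Y=I_d$, and $A = \tfrac12(G^\top Y + Y^\top G)$. Then $$\mathrm{tr}(A)^2 - \|A\|_F^2 \le \|G\|_*^2 - \|G\|_F^2,$$ where $\|\cdot\|_*$ is the nuclear norm and $\|\cdot\|_F$ the Frobenius norm. *)

theory Defs
  imports "HOL-Analysis.Analysis"
begin

text \<open>Real r x d matrices are modelled as real^'d^'r (rows indexed by 'r, columns by 'd).\<close>

definition diag_mat :: "('n::finite \<Rightarrow> real) \<Rightarrow> real^'n^'n" where
  "diag_mat s = (\<chi> i j. if i = j then s i else 0)"

text \<open>sigma is a family of singular values of G (indexed by the column index type):
  they are nonnegative and their squares are the eigenvalues (with multiplicity) of G^T G,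
  i.e. G^T G = V diag(sigma^2) V^T for an orthogonal V.\<close>
definition is_singular_values :: "real^'d::finite^'r::finite \<Rightarrow> ('d \<Rightarrow> real) \<Rightarrow> bool" where
  "is_singular_values G s \<longleftrightarrow> (\<forall>i. 0 \<le> s i) \<and>
     (\<exists>V. orthogonal_matrix V \<and>
          transpose G ** G = V ** diag_mat (\<lambda>i. (s i)^2) ** transpose V)"

definition singular_values :: "real^'d::finite^'r::finite \<Rightarrow> 'd \<Rightarrow> real" where
  "singular_values G = (SOME s. is_singular_values G s)"

definition nuclear_norm :: "real^'d::finite^'r::finite \<Rightarrow> real" where
  "nuclear_norm G = (\<Sum>i\<in>UNIV. singular_values G i)"

definition frob_norm :: "real^'d::finite^'r::finite \<Rightarrow> real" where
  "frob_norm G = sqrt (\<Sum>i\<in>UNIV. \<Sum>j\<in>UNIV. (G $ i $ j)^2)"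

end

theory Submission
  imports Defs
begin
lemma quad_zero:
  fixes a b :: real
  assumes "\<And>t. 2*t*a + t^2*b \<le> 0"
  shows "a = 0"
proof -
  define c where "c = \<bar>b\<bar> + 1"
  have c: "c > 0" "2*c + b \<ge> 2" unfolding c_def by auto
  have "2*(a/c)*a + (a/c)^2*b \<le> 0" using assms .
  then have "(2*(a/c)*a + (a/c)^2*b) * c^2 \<le> 0"
    by (simp add: mult_nonpos_nonneg)
  moreover have "(2*(a/c)*a + (a/c)^2*b) * c^2 = a^2 * (2*c + b)"
    using c by (simp add: field_simps power2_eq_square)
  ultimately have "a^2 * (2*c+b) \<le> 0" by simp
  with c have "a^2 \<le> 0"
    by (smt (verit) mult_le_0_iff zero_le_power2)
  then show ?thesis by simp
qed

lemma sym_inner: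
  fixes M :: "real^'n^'n"
  assumes "transpose M = M"
  shows "x \<bullet> (M *v y) = (M *v x) \<bullet> y"
proof -
  have "x \<bullet> (M *v y) = (x v* M) \<bullet> y" by (simp add: dot_lmul_matrix)
  also have "x v* M = transpose M *v x" by simp
  finally show ?thesis using assms by simp
qed

lemma spectral_aux:
  fixes M :: "real^'n^'n"
  assumes sym: "transpose M = M"
  shows "subspace S \<Longrightarrow> (\<forall>x\<in>S. M *v x \<in> S) \<Longrightarrow>
    \<exists>B. finite B \<and> B \<subseteq> S \<and> (\<forall>x\<in>B. norm x = 1 \<and> (\<exists>c. M *v x = c *\<^sub>R x))
        \<and> pairwise orthogonal B \<and> S \<subseteq> span B"
proof (induction "dim S" arbitrary: S rule: less_induct)
  case less
  show ?case
  proof (cases "S \<subseteq> {0}")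
    case True then show ?thesis by (intro exI[of _ "{}"]) auto
  next
    case False
    then obtain z where z: "z \<in> S" "z \<noteq> 0" by auto
    let ?K = "S \<inter> sphere 0 1"
    have cK: "compact ?K" using closed_subspace[OF less.prems(1)]
      by (metis Int_commute compact_Int_closed compact_sphere)
    have "z /\<^sub>R norm z \<in> ?K" using z less.prems(1)
      by (simp add: subspace_scale)
    hence neK: "?K \<noteq> {}" by auto
    have "bounded_linear (\<lambda>x. M *v x)" by (simp add: linear_conv_bounded_linear[symmetric])
    hence "continuous_on ?K (\<lambda>x. M *v x)" by (rule linear_continuous_on)
    hence ccK: "continuous_on ?K (\<lambda>x. x \<bullet> (M *v x))"
      by (intro continuous_intros)
    obtain v where vK: "v \<in> ?K" and vmax0: "\<forall>y\<in>?K. y \<bullet> (M *v y) \<le> v \<bullet> (M *v v)"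
      using continuous_attains_sup[OF cK neK ccK] by blast
    have vmax: "\<And>y. y \<in> ?K \<Longrightarrow> y \<bullet> (M *v y) \<le> v \<bullet> (M *v v)" using vmax0 by blast
    define l where "l = v \<bullet> (M *v v)"
    have vS: "v \<in> S" and vn: "norm v = 1" using vK by auto
    have vv: "v \<bullet> v = 1" using vn by (simp add: norm_eq_1)
    have key: "w \<bullet> (M *v v) = 0" if wS: "w \<in> S" and wv: "w \<bullet> v = 0" for w
    proof (rule quad_zero)
      fix t :: real
      define x where "x = v + t *\<^sub>R w"
      have xS: "x \<in> S" unfolding x_def using wS vS less.prems(1)
        by (simp add: subspace_add subspace_scale)
      have xx: "x \<bullet> x = 1 + t^2 * (w \<bullet> w)"
        unfolding x_def using vv wv
        by (simp add: inner_add_left inner_add_right inner_commute power2_eq_square)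
      have xpos: "x \<bullet> x > 0" using xx by (simp add: add_pos_nonneg)
      hence nx: "norm x > 0" by simp
      have "(x /\<^sub>R norm x) \<in> ?K" using xS nx less.prems(1) by (simp add: subspace_scale)
      hence "(x /\<^sub>R norm x) \<bullet> (M *v (x /\<^sub>R norm x)) \<le> l" unfolding l_def by (rule vmax)
      moreover have "(x /\<^sub>R norm x) \<bullet> (M *v (x /\<^sub>R norm x)) = (x \<bullet> (M *v x)) / (norm x)^2"
        by (simp add: matrix_vector_mult_scaleR power2_eq_square divide_inverse)
      ultimately have "(x \<bullet> (M *v x)) / (norm x)^2 \<le> l" by simp
      hence A: "x \<bullet> (M *v x) \<le> l * (x \<bullet> x)" using nx
        by (simp add: divide_le_eq power2_norm_eq_inner)
      have s: "v \<bullet> (M *v w) = w \<bullet> (M *v v)" using sym_inner[OF sym, of v w] by (simp add: inner_commute)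
      have "x \<bullet> (M *v x) = l + 2*t*(w \<bullet> (M *v v)) + t^2 * (w \<bullet> (M *v w))"
        unfolding x_def l_def using s
        by (simp add: matrix_vector_right_distrib matrix_vector_mult_scaleR inner_add_left inner_add_right power2_eq_square algebra_simps)
      with A xx show "2*t*(w \<bullet> (M *v v)) + t^2 * (w \<bullet> (M *v w) - l * (w \<bullet> w)) \<le> 0"
        by (simp add: algebra_simps)
    qed
    have eig: "M *v v = l *\<^sub>R v"
    proof -
      define u where "u = M *v v - l *\<^sub>R v"
      have uS: "u \<in> S" unfolding u_def using less.prems vS by (simp add: subspace_diff subspace_scale)
      have uv: "u \<bullet> v = 0" unfolding u_def l_def using vv by (simp add: inner_diff_left inner_diff_right inner_commute)
      have "u \<bullet> (M *v v) = 0" using key[OF uS uv] .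
      hence "u \<bullet> u = 0" using uv unfolding u_def by (simp add: inner_diff_right inner_diff_left inner_commute)
      thus ?thesis unfolding u_def by simp
    qed
    define S' where "S' = {x \<in> S. x \<bullet> v = 0}"
    have sub': "subspace S'" unfolding S'_def using less.prems(1)
      by (auto simp: subspace_def inner_add_left)
    have inv': "\<forall>x\<in>S'. M *v x \<in> S'"
    proof
      fix x assume x: "x \<in> S'"
      have "(M *v x) \<bullet> v = x \<bullet> (M *v v)" using sym_inner[OF sym, of x v] by simp
      also have "\<dots> = 0" using x eig by (simp add: S'_def)
      finally show "M *v x \<in> S'" using x less.prems(2) by (simp add: S'_def)
    qed
    have "S' \<subset> S" using vS vv unfolding S'_def by (metis (mono_tags, lifting) mem_Collect_eq psubsetI subsetI zero_neq_one)
    hence "span S' \<subset> span S" using sub' less.prems(1) by (metis real_vector.span_eq_iff)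
    hence dlt: "dim S' < dim S" by (rule dim_psubset)
    then obtain B' where B': "finite B'" "B' \<subseteq> S'" "\<forall>x\<in>B'. norm x = 1 \<and> (\<exists>c. M *v x = c *\<^sub>R x)"
       "pairwise orthogonal B'" "S' \<subseteq> span B'"
      using less.hyps[OF dlt sub' inv'] by blast
    show ?thesis
    proof (intro exI[of _ "insert v B'"] conjI)
      show "finite (insert v B')" using B' by simp
      show "insert v B' \<subseteq> S" using B' vS unfolding S'_def by auto
      show "\<forall>x\<in>insert v B'. norm x = 1 \<and> (\<exists>c. M *v x = c *\<^sub>R x)" using B' vn eig by auto
      show "pairwise orthogonal (insert v B')"
        using B'(2,4) unfolding S'_def
        by (auto simp: pairwise_insert orthogonal_def inner_commute)
      show "S \<subseteq> span (insert v B')"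
      proof
        fix x assume x: "x \<in> S"
        have "x - (x \<bullet> v) *\<^sub>R v \<in> S'" unfolding S'_def using x vS less.prems(1) vv
          by (simp add: subspace_diff subspace_scale inner_diff_left)
        hence "x - (x \<bullet> v) *\<^sub>R v \<in> span (insert v B')" using B'(5)
          by (meson span_mono subset_insertI subsetD)
        moreover have "(x \<bullet> v) *\<^sub>R v \<in> span (insert v B')" by (simp add: span_base span_scale)
        ultimately have "x - (x \<bullet> v) *\<^sub>R v + (x \<bullet> v) *\<^sub>R v \<in> span (insert v B')"
          by (rule span_add)
        thus "x \<in> span (insert v B')" by simp
      qed
    qed
  qed
qed


lemma inner_transpose:
  fixes A :: "real^'n^'m"
  shows "x \<bullet> (transpose A *v y) = (A *v x) \<bullet> y"
proof -
  have "x \<bullet> (transpose A *v y) = (y v* A) \<bullet> x" by (simp add: inner_commute)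
  also have "\<dots> = y \<bullet> (A *v x)" by (simp add: dot_lmul_matrix)
  finally show ?thesis by (simp add: inner_commute)
qed

lemma spectral_matrix:
  fixes M :: "real^'n^'n"
  assumes sym: "transpose M = M"
  shows "\<exists>V lam. orthogonal_matrix V \<and> M = V ** diag_mat lam ** transpose V \<and>
            (\<forall>j. lam j = column j V \<bullet> (M *v column j V))"
proof -
  obtain B where B: "finite B" "\<forall>x\<in>B. norm x = 1 \<and> (\<exists>c. M *v x = c *\<^sub>R x)"
     "pairwise orthogonal B" "UNIV \<subseteq> span B"
    using spectral_aux[OF sym, of UNIV] by auto
  have "0 \<notin> B" using B(2) by force
  hence ind: "independent B" using B(3) pairwise_orthogonal_independent by blast
  have spB: "span B = UNIV" using B(4) by auto
  have "card B = dim (span B)" using dim_span_eq_card_independent[OF ind] by simp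
  also have "\<dots> = CARD('n)" using spB by simp
  finally have cB: "card (UNIV :: 'n set) = card B" by simp
  obtain e where e: "bij_betw e (UNIV :: 'n set) B"
    using finite_same_card_bij[of "UNIV::'n set" B] B(1) cB by auto
  have eB: "e j \<in> B" for j using e by (auto simp: bij_betw_def)
  have einj: "e i = e j \<Longrightarrow> i = j" for i j using e by (auto simp: bij_betw_def inj_def)
  define lam where "lam j = (SOME c. M *v e j = c *\<^sub>R e j)" for j
  have eig: "M *v e j = lam j *\<^sub>R e j" for j
    unfolding lam_def using B(2) eB[of j] by (metis (mono_tags, lifting) someI_ex)
  define V :: "real^'n^'n" where "V = (\<chi> i j. e j $ i)"
  have col: "column j V = e j" for j by (simp add: V_def column_def vec_eq_iff)
  have orth: "orthogonal_matrix V"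
    unfolding orthogonal_matrix_orthonormal_columns col
  proof (intro conjI allI impI)
    show "norm (e i) = 1" for i using B(2) eB by blast
    show "orthogonal (e i) (e j)" if "i \<noteq> j" for i j
      using B(3) eB[of i] eB[of j] einj[of i j] that by (auto simp: pairwise_def)
  qed
  have MV: "M ** V = V ** diag_mat lam"
  proof -
    have "(M ** V) $ i $ j = (V ** diag_mat lam) $ i $ j" for i j
    proof -
      have "(M ** V) $ i $ j = (M *v e j) $ i"
        by (simp add: matrix_matrix_mult_def matrix_vector_mult_def V_def)
      also have "\<dots> = lam j * e j $ i" by (simp add: eig)
      also have "\<dots> = (V ** diag_mat lam) $ i $ j"
        by (simp add: matrix_matrix_mult_def diag_mat_def V_def if_distrib cong: if_cong)
      finally show ?thesis .
    qed
    thus ?thesis by (simp add: vec_eq_iff)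
  qed
  have "M = M ** (V ** transpose V)" using orth by (simp add: orthogonal_matrix_def)
  also have "\<dots> = V ** diag_mat lam ** transpose V" by (simp add: matrix_mul_assoc MV)
  finally have Md: "M = V ** diag_mat lam ** transpose V" .
  have "lam j = column j V \<bullet> (M *v column j V)" for j
  proof -
    have "e j \<bullet> e j = 1" using B(2) eB[of j] by (simp add: norm_eq_1)
    thus ?thesis by (simp add: col eig)
  qed
  with orth Md show ?thesis by blast
qed

lemma sv_exists: "is_singular_values G (singular_values G)"
proof -
  define M where "M = transpose G ** G"
  have "transpose M = M" by (simp add: M_def matrix_transpose_mul)
  then obtain V lam where V: "orthogonal_matrix V" "M = V ** diag_mat lam ** transpose V"
      "\<forall>j. lam j = column j V \<bullet> (M *v column j V)"
    using spectral_matrix by blast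
  have lpos: "lam j \<ge> 0" for j
  proof -
    have "lam j = column j V \<bullet> (transpose G *v (G *v column j V))"
      using V(3) by (simp add: M_def matrix_vector_mul_assoc)
    also have "\<dots> = (G *v column j V) \<bullet> (G *v column j V)" by (rule inner_transpose)
    finally show ?thesis by simp
  qed
  define s where "s j = sqrt (lam j)" for j
  have "(\<lambda>i. (s i)^2) = lam" using lpos by (simp add: s_def fun_eq_iff)
  hence "is_singular_values G s"
    unfolding is_singular_values_def
  proof (intro conjI allI exI)
    show "0 \<le> s i" for i by (simp add: s_def lpos)
    show "orthogonal_matrix V" by (rule V(1))
    show "transpose G ** G = V ** diag_mat (\<lambda>i. (s i)^2) ** transpose V"
      using V(2) \<open>(\<lambda>i. (s i)^2) = lam\<close> by (simp add: M_def)
  qed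
  thus ?thesis unfolding singular_values_def by (rule someI[where P="is_singular_values G"])
qed


lemma frob_sq: "(frob_norm X)^2 = trace (transpose X ** X)"
proof -
  have "(frob_norm X)^2 = (\<Sum>i\<in>UNIV. \<Sum>j\<in>UNIV. (X $ i $ j)^2)"
    unfolding frob_norm_def by (simp add: sum_nonneg)
  also have "\<dots> = (\<Sum>j\<in>UNIV. \<Sum>i\<in>UNIV. (X $ i $ j)^2)" by (rule sum.swap)
  also have "\<dots> = trace (transpose X ** X)"
    by (simp add: trace_def matrix_matrix_mult_def transpose_def power2_eq_square)
  finally show ?thesis .
qed

lemma conj_entry:
  fixes V B :: "real^'n^'n"
  shows "(transpose V ** B ** V) $ i $ j = column i V \<bullet> (B *v column j V)"
  by (simp add: matrix_matrix_mult_def matrix_vector_mult_def inner_vec_def column_def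
      transpose_def sum_distrib_left sum_distrib_right mult_ac,
      subst sum.swap, simp add: mult_ac)

lemma sum_sq_ineq:
  fixes a s :: "'i \<Rightarrow> real"
  assumes "finite I" and "\<And>i. i \<in> I \<Longrightarrow> \<bar>a i\<bar> \<le> s i"
  shows "(\<Sum>i\<in>I. a i)^2 - (\<Sum>i\<in>I. (a i)^2) \<le> (\<Sum>i\<in>I. s i)^2 - (\<Sum>i\<in>I. (s i)^2)"
proof -
  have gen: "(\<Sum>i\<in>I. f i)^2 - (\<Sum>i\<in>I. (f i)^2) = (\<Sum>i\<in>I. \<Sum>j\<in>I. (if i = j then 0 else f i * f j))"
    for f :: "'i \<Rightarrow> real"
  proof -
    have "(\<Sum>i\<in>I. f i)^2 = (\<Sum>i\<in>I. \<Sum>j\<in>I. f i * f j)"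
      by (simp add: power2_eq_square sum_product)
    moreover have "(\<Sum>i\<in>I. (f i)^2) = (\<Sum>i\<in>I. \<Sum>j\<in>I. (if i = j then f i * f j else 0))"
      using assms(1) by (simp add: power2_eq_square)
    ultimately show ?thesis
      by (simp add: sum_subtractf[symmetric] if_distrib cong: if_cong)
  qed
  have "(\<Sum>i\<in>I. \<Sum>j\<in>I. (if i = j then 0 else a i * a j)) \<le> (\<Sum>i\<in>I. \<Sum>j\<in>I. (if i = j then 0 else s i * s j))"
  proof (intro sum_mono)
    fix i j assume i: "i \<in> I" and j: "j \<in> I"
    have "a i * a j \<le> \<bar>a i\<bar> * \<bar>a j\<bar>" by (metis abs_ge_self abs_mult)
    also have "\<dots> \<le> s i * s j" using assms(2)[OF i] assms(2)[OF j] by (simp add: mult_mono')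
    finally show "(if i = j then 0 else a i * a j) \<le> (if i = j then 0 else s i * s j)" by simp
  qed
  thus ?thesis by (simp only: gen)
qed


lemma diag_mult: "(diag_mat d *v x) $ k = d k * x $ k"
proof -
  have "(diag_mat d *v x) $ k = (\<Sum>j\<in>UNIV. (if k = j then d k else 0) * x $ j)"
    by (simp add: matrix_vector_mult_def diag_mat_def)
  also have "\<dots> = (\<Sum>j\<in>UNIV. if k = j then d k * x $ j else 0)"
    by (rule sum.cong) auto
  also have "\<dots> = d k * x $ k" by simp
  finally show ?thesis .
qed

lemma diag_axis: "diag_mat d *v axis i 1 = d i *\<^sub>R axis i (1::real)"
  by (simp add: vec_eq_iff diag_mult axis_def)

theorem lemmaB3:
  fixes G Y :: "real^'d::finite^'r::finite" and A :: "real^'d^'d"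
  assumes "CARD('d) \<le> CARD('r)"
    and "transpose Y ** Y = mat 1"
    and "A = (1/2) *\<^sub>R (transpose G ** Y + transpose Y ** G)"
  shows "(trace A)^2 - (frob_norm A)^2 \<le> (nuclear_norm G)^2 - (frob_norm G)^2"
proof -
  define s where "s = singular_values G"
  have sv: "is_singular_values G s" unfolding s_def by (rule sv_exists)
  then obtain V where s0: "\<And>i. 0 \<le> s i" and V: "orthogonal_matrix V"
    and GG: "transpose G ** G = V ** diag_mat (\<lambda>i. (s i)^2) ** transpose V"
    unfolding is_singular_values_def by blast
  define D where "D = diag_mat (\<lambda>i. (s i)^2)"
  have VtV: "transpose V ** V = mat 1" and VVt: "V ** transpose V = mat 1"
    using V by (auto simp: orthogonal_matrix_def)
  define A' where "A' = transpose V ** A ** V"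
  have trD: "trace D = (\<Sum>i\<in>UNIV. (s i)^2)" by (simp add: D_def diag_mat_def trace_def)
  have fG: "(frob_norm G)^2 = (\<Sum>i\<in>UNIV. (s i)^2)"
  proof -
    have "(frob_norm G)^2 = trace (V ** D ** transpose V)" using GG by (simp add: frob_sq D_def)
    also have "\<dots> = trace (transpose V ** (V ** D))" by (rule trace_mul_sym)
    also have "\<dots> = trace D" by (simp add: matrix_mul_assoc VtV)
    finally show ?thesis using trD by simp
  qed
  have nG: "nuclear_norm G = (\<Sum>i\<in>UNIV. s i)" by (simp add: nuclear_norm_def s_def)
  have trA: "trace A = trace A'"
  proof -
    have "trace A' = trace (transpose V ** (A ** V))"
      unfolding A'_def by (simp add: matrix_mul_assoc)
    also have "\<dots> = trace ((A ** V) ** transpose V)" by (rule trace_mul_sym)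
    also have "\<dots> = trace (A ** (V ** transpose V))" by (simp add: matrix_mul_assoc)
    also have "\<dots> = trace A" by (simp add: VVt)
    finally show ?thesis by simp
  qed
  have fA: "(frob_norm A)^2 = (frob_norm A')^2"
  proof -
    have "transpose A' ** A' = transpose V ** transpose A ** (V ** transpose V) ** A ** V"
      unfolding A'_def by (simp add: matrix_transpose_mul matrix_mul_assoc)
    also have "\<dots> = transpose V ** (transpose A ** A ** V)" by (simp add: VVt matrix_mul_assoc)
    finally have "trace (transpose A' ** A') = trace (transpose V ** (transpose A ** A ** V))" by simp
    also have "\<dots> = trace ((transpose A ** A ** V) ** transpose V)" by (rule trace_mul_sym)
    also have "\<dots> = trace (transpose A ** A ** (V ** transpose V))" by (simp add: matrix_mul_assoc)
    also have "\<dots> = trace (transpose A ** A)" by (simp add: VVt)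
    finally show ?thesis by (simp add: frob_sq)
  qed
  have diagb: "\<bar>A' $ i $ i\<bar> \<le> s i" for i
  proof -
    define v where "v = column i V"
    have "A' $ i $ i = v \<bullet> (A *v v)" unfolding A'_def v_def by (rule conj_entry)
    also have "\<dots> = (G *v v) \<bullet> (Y *v v)"
    proof -
      have "A *v v = (1/2) *\<^sub>R (transpose G *v (Y *v v) + transpose Y *v (G *v v))"
        using assms(3) by (simp add: matrix_vector_mult_add_rdistrib matrix_vector_mul_assoc
            scaleR_matrix_vector_assoc[symmetric])
      thus ?thesis using inner_transpose[of v G "Y *v v"] inner_transpose[of v Y "G *v v"]
        by (simp add: inner_add_right inner_commute)
    qed
    finally have Ai: "A' $ i $ i = (G *v v) \<bullet> (Y *v v)" .
    have Vv: "transpose V *v v = axis i 1"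
    proof -
      have "transpose V *v v = column i (transpose V ** V)"
        by (simp add: v_def column_def vec_eq_iff matrix_vector_mult_def matrix_matrix_mult_def)
      also have "\<dots> = axis i 1" by (simp add: VtV column_def mat_def axis_def vec_eq_iff)
      finally show ?thesis .
    qed
    have "(norm (G *v v))^2 = v \<bullet> (transpose G *v (G *v v))"
      using inner_transpose[of v G "G *v v"] by (simp add: power2_norm_eq_inner)
    also have "\<dots> = v \<bullet> (V *v (D *v (transpose V *v v)))"
      by (simp only: matrix_vector_mul_assoc GG D_def matrix_mul_assoc)
    also have "\<dots> = (transpose V *v v) \<bullet> (D *v (transpose V *v v))"
      using inner_transpose[of v "transpose V"] by simp
    also have "\<dots> = (s i)^2" unfolding Vv D_def diag_axis by (simp add: inner_axis_axis)
    finally have nG2: "(norm (G *v v))^2 = (s i)^2" .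
    have nGv: "norm (G *v v) = s i"
      using nG2 s0[of i] by (metis norm_ge_zero power2_eq_iff_nonneg)
    have "(norm (Y *v v))^2 = v \<bullet> (transpose Y *v (Y *v v))"
      using inner_transpose[of v Y "Y *v v"] by (simp add: power2_norm_eq_inner)
    also have "\<dots> = v \<bullet> v" by (simp only: matrix_vector_mul_assoc assms(2) matrix_vector_mul_lid)
    also have "\<dots> = 1" using V unfolding orthogonal_matrix_orthonormal_columns
      by (simp add: v_def norm_eq_1)
    finally have nYv: "norm (Y *v v) = 1" by (smt (verit) norm_ge_zero power2_eq_1_iff)
    have "\<bar>A' $ i $ i\<bar> \<le> norm (G *v v) * norm (Y *v v)" unfolding Ai by (rule Cauchy_Schwarz_ineq2)
    thus ?thesis using nGv nYv by simp
  qed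
  have fA': "(frob_norm A')^2 \<ge> (\<Sum>i\<in>UNIV. (A' $ i $ i)^2)"
  proof -
    have "(frob_norm A')^2 = (\<Sum>i\<in>UNIV. \<Sum>j\<in>UNIV. (A' $ i $ j)^2)"
      unfolding frob_norm_def by (simp add: sum_nonneg)
    also have "\<dots> \<ge> (\<Sum>i\<in>UNIV. (A' $ i $ i)^2)"
      by (intro sum_mono member_le_sum) auto
    finally show ?thesis .
  qed
  have "(trace A)^2 - (frob_norm A)^2 \<le> (\<Sum>i\<in>UNIV. A' $ i $ i)^2 - (\<Sum>i\<in>UNIV. (A' $ i $ i)^2)"
    using trA fA fA' by (simp add: trace_def)
  also have "\<dots> \<le> (\<Sum>i\<in>UNIV. s i)^2 - (\<Sum>i\<in>UNIV. (s i)^2)"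
    by (rule sum_sq_ineq) (auto intro: diagb)
  finally show ?thesis using fG nG by simp
qed

end
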